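(* Let $\mathsf P$ be a network coding problem. A rate-capacity tuple $(\lambda,\omega)$ is $0$-achievable subject to the generalised routing constraint if and only if \[(\lambda,\omega)\in\mathsf{CL}\big(\mathrm{proj}^*_{\mathsf P}[\Gamma_{AA}\cap\mathcal C_T(\mathsf P)\cap\mathcal C_I(\mathsf P)]\big),\] where for $h\in\mathcal H[\mathcal S\cup\mathcal E]$, $\mathrm{proj}^*_{\mathsf P}[h]$ is the tuple with $\mathrm{proj}^*_{\mathsf P}[h](s)=\min_{u\in D(s)}h(s\wedge\mathrm{in}(u))$ for $s\in\mathcal S$ and $\mathrm{proj}^*_{\mathsf P}[h](e)=h(e)$ for $e\in\mathcal E$.
   Context: A network is $\mathsf G=(\mathcal V,\mathcal E)$, $\mathcal V$ a finite set of nodes, $\mathcal E$ a finite set of hyperedges, each $e$ with tail $\mathrm{tail}(e)\in\mathcal V$ and head $\mathrm{head}(e)\subseteq\mathcal V$, without directed cycles. A connection constraint $\mathsf M=(\mathcal S,O,D)$: finite source index set $\mathcal S$, $O:\mathcal S\to2^{\mathcal V}$ (where source $s$ is available), $D:\mathcal S\to2^{\mathcal V}$ (sinks of $s$). $\mathsf P=(\mathsf G,\mathsf M)$. Sources are imaginary edges with $\mathrm{head}(s)=O(s)$; $\mathrm{in}(e)=\{f\in\mathcal S\cup\mathcal E:\mathrm{tail}(e)\in\mathrm{head}(f)\}$ for $e\in\mathcal E$, $\mathrm{in}(u)=\{f\in\mathcal S\cup\mathcal E:u\in\mathrm{head}(f)\}$ for $u\in\mathcal V$. A rate-capacity tuple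 is $(\lambda,\omega)$, $\lambda:\mathcal S\to\mathbb R_{\ge0}$, $\omega:\mathcal E\to\mathbb R_{\ge0}$. A routing subnetwork is a subset $\mathcal T\subseteq\mathcal S\cup\mathcal E$ with $|\mathcal T\cap\mathcal S|=1$ (the unique source is $\nu(\mathcal T)$) such that $\mathrm{in}(e)\cap\mathcal T\ne\emptyset$ for every $e\in\mathcal T\cap\mathcal E$. A tuple $(\lambda,\omega)$ is $0$-achievable subject to the generalised routing constraint if there is a (finite) collection of routing subnetworks $\mathcal T_i$ with capacities $c_i\ge0$ such that (R1) $\omega(e)\ge\sum_{i:e\in\mathcal T_i}c_i$ for all $e\in\mathcal E$, and (R2$'$) for every $s\in\mathcal S$ and $u\in D(s)$, $\lambda(s)\le\sum_{i:\ \mathrm{in}(u)\cap\mathcal T_i\ne\emptyset,\ \nu(\mathcal T_i)=s}c_i$. $\mathcal H[\mathcal S\cup\mathcal E]$ is the set of real functions on subsets of $\mathcal S\cup\mathcal E$; $g(\alpha\mid\beta)=g(\alpha\cup\beta)-g(\beta)$, $g(\alpha\wedge\beta)=g(\alpha)+g(\beta)-g(\alpha\cup\beta)$. A function $h$ is atomic if there is $\mathcal T\subseteq\mathcal S\cup\mathcal E$ with $h(\beta)=1$ when $\beta\cap\mathcal T\ne\emptyset$ and $0$ otherwise; almost atomic if it is a finite nonnegative combination of atomic functions; $\Gamma_{AA}$ is the set of almost atomic functions. $\mathcal C_I(\mathsf P)=\{h:h(\mathcal S)=\sum_sh(s)\}$, $\mathcal C_T(\mathsf P)=\{h:h(e\mid\mathrm{in}(e))=0\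 \forall e\in\mathcal E\}$. Operators are applied elementwise to sets. For a set $\mathcal R$ of tuples, $\mathsf{CL}(\mathcal R)$ is the set of $(\lambda,\omega)$ such that there exist $(\lambda^n,\omega^n)\in\mathcal R$ and $c_n>0$ with $\lim_nc_n\omega^n(e)\le\omega(e)$ and $\lim_nc_n\lambda^n(s)\ge\lambda(s)$ for all $e,s$. *)

theory Defs
  imports "HOL-Analysis.Analysis"
begin

text \<open>Elements of S \<union> E are represented as ('s + 'e): Inl s is a source, Inr e an edge.\<close>

definition universe :: "'s set \<Rightarrow> 'e set \<Rightarrow> ('s + 'e) set" where
  "universe S E = Inl ` S \<union> Inr ` E"

fun headf :: "('e \<Rightarrow> 'v set) \<Rightarrow> ('s \<Rightarrow> 'v set) \<Rightarrow> ('s + 'e) \<Rightarrow> 'v set" where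
  "headf hed Orig (Inl s) = Orig s"
| "headf hed Orig (Inr e) = hed e"

definition in_node :: "'s set \<Rightarrow> 'e set \<Rightarrow> ('e \<Rightarrow> 'v set) \<Rightarrow> ('s \<Rightarrow> 'v set) \<Rightarrow> 'v \<Rightarrow> ('s + 'e) set" where
  "in_node S E hed Orig u = {f \<in> universe S E. u \<in> headf hed Orig f}"

definition in_edge :: "'s set \<Rightarrow> 'e set \<Rightarrow> ('e \<Rightarrow> 'v) \<Rightarrow> ('e \<Rightarrow> 'v set) \<Rightarrow> ('s \<Rightarrow> 'v set) \<Rightarrow> 'e \<Rightarrow> ('s + 'e) set" where
  "in_edge S E tal hed Orig e = in_node S E hed Orig (tal e)"

definition network_problem ::
  "'v set \<Rightarrow> 'e set \<Rightarrow> ('e \<Rightarrow> 'v) \<Rightarrow> ('e \<Rightarrow> 'v set) \<Rightarrow> 's set \<Rightarrow> ('s \<Rightarrow> 'v set) \<Rightarrow> ('s \<Rightarrow> 'v set) \<Rightarrow> bool" where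
  "network_problem V E tal hed S Orig D \<longleftrightarrow>
     finite V \<and> finite E \<and> finite S \<and>
     (\<forall>e\<in>E. tal e \<in> V \<and> hed e \<subseteq> V) \<and>
     (\<forall>s\<in>S. Orig s \<subseteq> V \<and> D s \<subseteq> V) \<and>
     acyclic {(tal e, v) | e v. e \<in> E \<and> v \<in> hed e}"

definition nu :: "('s + 'e) set \<Rightarrow> 's" where
  "nu T = (THE s. Inl s \<in> T)"

definition routing_subnetwork ::
  "'s set \<Rightarrow> 'e set \<Rightarrow> ('e \<Rightarrow> 'v) \<Rightarrow> ('e \<Rightarrow> 'v set) \<Rightarrow> ('s \<Rightarrow> 'v set) \<Rightarrow> ('s + 'e) set \<Rightarrow> bool" where
  "routing_subnetwork S E tal hed Orig T \<longleftrightarrow>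
     T \<subseteq> universe S E \<and> card (T \<inter> Inl ` S) = 1 \<and>
     (\<forall>e\<in>E. Inr e \<in> T \<longrightarrow> in_edge S E tal hed Orig e \<inter> T \<noteq> {})"

definition zero_achievable_routing ::
  "'e set \<Rightarrow> ('e \<Rightarrow> 'v) \<Rightarrow> ('e \<Rightarrow> 'v set) \<Rightarrow> 's set \<Rightarrow> ('s \<Rightarrow> 'v set) \<Rightarrow> ('s \<Rightarrow> 'v set)
     \<Rightarrow> ('s \<Rightarrow> real) \<Rightarrow> ('e \<Rightarrow> real) \<Rightarrow> bool" where
  "zero_achievable_routing E tal hed S Orig D lam om \<longleftrightarrow>
     (\<exists>(n::nat) (T :: nat \<Rightarrow> ('s + 'e) set) (c :: nat \<Rightarrow> real).
        (\<forall>i<n. routing_subnetwork S E tal hed Orig (T i) \<and> c i \<ge> 0) \<and>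
        (\<forall>e\<in>E. om e \<ge> (\<Sum>i\<in>{i. i < n \<and> Inr e \<in> T i}. c i)) \<and>
        (\<forall>s\<in>S. \<forall>u\<in>D s. lam s \<le>
            (\<Sum>i\<in>{i. i < n \<and> in_node S E hed Orig u \<inter> T i \<noteq> {} \<and> nu (T i) = s}. c i)))"

text \<open>Set functions h on subsets of S \<union> E (values outside are irrelevant).\<close>
definition atomic :: "'s set \<Rightarrow> 'e set \<Rightarrow> (('s + 'e) set \<Rightarrow> real) \<Rightarrow> bool" where
  "atomic S E h \<longleftrightarrow> (\<exists>T \<subseteq> universe S E. \<forall>\<beta> \<subseteq> universe S E.
      h \<beta> = (if \<beta> \<inter> T \<noteq> {} then 1 else 0))"

definition almost_atomic :: "'s set \<Rightarrow> 'e set \<Rightarrow> (('s + 'e) set \<Rightarrow> real) \<Rightarrow> bool" where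
  "almost_atomic S E h \<longleftrightarrow> (\<exists>(n::nat) (a :: nat \<Rightarrow> ('s + 'e) set \<Rightarrow> real) (c :: nat \<Rightarrow> real).
      (\<forall>i<n. atomic S E (a i) \<and> c i \<ge> 0) \<and>
      (\<forall>\<beta> \<subseteq> universe S E. h \<beta> = (\<Sum>i<n. c i * a i \<beta>)))"

definition C_I :: "'s set \<Rightarrow> (('s + 'e) set \<Rightarrow> real) \<Rightarrow> bool" where
  "C_I S h \<longleftrightarrow> h (Inl ` S) = (\<Sum>s\<in>S. h {Inl s})"

definition C_T :: "'s set \<Rightarrow> 'e set \<Rightarrow> ('e \<Rightarrow> 'v) \<Rightarrow> ('e \<Rightarrow> 'v set) \<Rightarrow> ('s \<Rightarrow> 'v set)
    \<Rightarrow> (('s + 'e) set \<Rightarrow> real) \<Rightarrow> bool" where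
  "C_T S E tal hed Orig h \<longleftrightarrow> (\<forall>e\<in>E.
      h ({Inr e} \<union> in_edge S E tal hed Orig e) - h (in_edge S E tal hed Orig e) = 0)"

text \<open>g(a \<and> b) = g(a) + g(b) - g(a \<union> b)\<close>
definition mutual :: "('a set \<Rightarrow> real) \<Rightarrow> 'a set \<Rightarrow> 'a set \<Rightarrow> real" where
  "mutual g a b = g a + g b - g (a \<union> b)"

text \<open>proj*: the source component is a minimum over D(s), taken in ereal so that
  the minimum over an empty D(s) is +\<infinity>.\<close>
definition proj_star :: "'s set \<Rightarrow> 'e set \<Rightarrow> ('e \<Rightarrow> 'v set) \<Rightarrow> ('s \<Rightarrow> 'v set) \<Rightarrow> ('s \<Rightarrow> 'v set)
    \<Rightarrow> (('s + 'e) set \<Rightarrow> real) \<Rightarrow> ('s \<Rightarrow> ereal) \<times> ('e \<Rightarrow> real)" where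
  "proj_star S E hed Orig D h =
     ((\<lambda>s. INF u\<in>D s. ereal (mutual h {Inl s} (in_node S E hed Orig u))),
      (\<lambda>e. h {Inr e}))"

definition CL :: "'s set \<Rightarrow> 'e set \<Rightarrow> (('s \<Rightarrow> ereal) \<times> ('e \<Rightarrow> real)) set
    \<Rightarrow> (('s \<Rightarrow> real) \<times> ('e \<Rightarrow> real)) set" where
  "CL S E R = {(lam, om). \<exists>(seq :: nat \<Rightarrow> ('s \<Rightarrow> ereal) \<times> ('e \<Rightarrow> real)) (c :: nat \<Rightarrow> real).
      (\<forall>n. seq n \<in> R \<and> c n > 0) \<and>
      (\<forall>e\<in>E. \<exists>L. ((\<lambda>n. c n * snd (seq n) e) \<longlonglongrightarrow> L) \<and> L \<le> om e) \<and>
      (\<forall>s\<in>S. \<exists>L. ((\<lambda>n. ereal (c n) * fst (seq n) s) \<longlonglongrightarrow> L) \<and> L \<ge> ereal (lam s))}"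

end

theory Submission
  imports Defs
begin

lemma in_node_sub: "in_node S E hed Orig u \<subseteq> universe S E"
  by (auto simp: in_node_def)

lemma in_edge_sub: "in_edge S E tal hed Orig e \<subseteq> universe S E"
  by (auto simp: in_edge_def in_node_def)

lemma finite_universe: "finite S \<Longrightarrow> finite E \<Longrightarrow> finite (universe S E)"
  by (simp add: universe_def)

lemma rs_sub: "routing_subnetwork S E tal hed Orig T \<Longrightarrow> T \<subseteq> universe S E"
  by (simp add: routing_subnetwork_def)

lemma finite_RS: "finite S \<Longrightarrow> finite E \<Longrightarrow> finite {T. routing_subnetwork S E tal hed Orig T \<and> P T}"
  by (rule finite_subset[of _ "Pow (universe S E)"]) (auto simp: finite_universe dest: rs_sub)

lemma sing_mem: "A = {x} \<Longrightarrow> a \<in> A \<Longrightarrow> a = x" by simp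

lemma rs_nu:
  assumes r: "routing_subnetwork S E tal hed Orig T" and s: "Inl s \<in> T"
  shows "nu T = s \<and> s \<in> S"
proof -
  from r have sub: "T \<subseteq> universe S E" and c: "card (T \<inter> Inl ` S) = 1"
    using r unfolding routing_subnetwork_def by blast+
  from s sub have sS: "s \<in> S" unfolding universe_def by blast
  from c have "\<exists>x. T \<inter> Inl ` S = {x}" using card_1_singleton_iff[of "T \<inter> Inl ` S"] by simp
  then obtain x where x: "T \<inter> Inl ` S = {x}" by blast
  have "Inl s \<in> T \<inter> Inl ` S" using s sS by blast
  then have xs: "x = Inl s" using sing_mem[OF x] by simp
  have "(THE s'. Inl s' \<in> T) = s"
  proof (rule the_equality)
    show "Inl s \<in> T" by fact
    fix s' assume "Inl s' \<in> T"
    with sub have "s' \<in> S" unfolding universe_def by blast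
    with \<open>Inl s' \<in> T\<close> have "Inl s' \<in> T \<inter> Inl ` S" by blast
    then have "Inl s' = x" by (rule sing_mem[OF x])
    then show "s' = s" using xs by simp
  qed
  then show ?thesis using sS by (simp add: nu_def)
qed

lemma rs_nu_in:
  assumes r: "routing_subnetwork S E tal hed Orig T"
  shows "Inl (nu T) \<in> T \<and> nu T \<in> S"
proof -
  from r have c: "card (T \<inter> Inl ` S) = 1"
    using r unfolding routing_subnetwork_def by blast+
  from c have "\<exists>x. T \<inter> Inl ` S = {x}" using card_1_singleton_iff[of "T \<inter> Inl ` S"] by simp
  then obtain x where x: "T \<inter> Inl ` S = {x}" by blast
  then have "x \<in> T \<inter> Inl ` S" by simp
  then have "x \<in> T" "x \<in> Inl ` S" by blast+
  then obtain t where "x = Inl t" "Inl t \<in> T" by blast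
  with rs_nu[OF r this(2)] show ?thesis by simp
qed

lemma rs_noedge:
  assumes r: "routing_subnetwork S E tal hed Orig T" and ne: "\<not> (\<exists>e\<in>E. Inr e \<in> T)"
  shows "T = {Inl (nu T)}"
proof -
  from r have sub: "T \<subseteq> universe S E" and c: "card (T \<inter> Inl ` S) = 1"
    using r unfolding routing_subnetwork_def by blast+
  have "T \<subseteq> Inl ` S" using sub ne unfolding universe_def by blast
  then have "T \<inter> Inl ` S = T" by blast
  then have "card T = 1" using c by simp
  then have "\<exists>x. T = {x}" using card_1_singleton_iff[of T] by simp
  then obtain x where x: "T = {x}" by blast
  define t where "t = nu T"
  have "Inl t \<in> T" using rs_nu_in[OF r] unfolding t_def by blast
  then have "Inl t = x" by (rule sing_mem[OF x])
  then have "T = {Inl t}" using x by simp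
  then show ?thesis unfolding t_def .
qed

lemma single_rs: "s \<in> S \<Longrightarrow> routing_subnetwork S E tal hed Orig {Inl s}"
proof -
  assume s: "s \<in> S"
  have a: "{Inl s} \<subseteq> universe S E" using s unfolding universe_def by blast
  have "{Inl s} \<inter> Inl ` S = {Inl s}" using s by blast
  then have b: "card ({Inl s} \<inter> Inl ` S) = 1" by (subst \<open>{Inl s} \<inter> Inl ` S = {Inl s}\<close>) simp
  have c: "\<forall>e\<in>E. Inr e \<in> {Inl s} \<longrightarrow> in_edge S E tal hed Orig e \<inter> {Inl s} \<noteq> {}" by blast
  show ?thesis unfolding routing_subnetwork_def using a b c by blast
qed

lemma nu_single: "nu {Inl s} = s"
  by (simp add: nu_def)

lemma mutual_ind:
  "mutual (\<lambda>\<beta>. \<Sum>i\<in>I. c i * of_bool (\<beta> \<inter> T i \<noteq> {})) A B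
    = (\<Sum>i\<in>I. c i * of_bool (A \<inter> T i \<noteq> {} \<and> B \<inter> T i \<noteq> {}))"
proof -
  have "\<And>i. c i * of_bool (A \<inter> T i \<noteq> {}) + c i * of_bool (B \<inter> T i \<noteq> {})
      - c i * of_bool ((A \<union> B) \<inter> T i \<noteq> {}) = c i * of_bool (A \<inter> T i \<noteq> {} \<and> B \<inter> T i \<noteq> {})"
    by (cases "A \<inter> T i = {}"; cases "B \<inter> T i = {}") (simp_all add: Int_Un_distrib2)
  then show ?thesis
    unfolding mutual_def sum.distrib[symmetric] sum_subtractf[symmetric] by simp
qed

lemma mutual_cong:
  "\<forall>\<beta>\<subseteq>U. h \<beta> = g \<beta> \<Longrightarrow> A \<subseteq> U \<Longrightarrow> B \<subseteq> U \<Longrightarrow> mutual h A B = mutual g A B"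
  by (simp add: mutual_def)

lemma sum_ind: "finite I \<Longrightarrow> (\<Sum>i\<in>I. c i * of_bool (P i)) = (\<Sum>i\<in>{i\<in>I. P i}. (c i::real))"
proof -
  assume f: "finite I"
  have "(\<Sum>i\<in>I. c i * of_bool (P i)) = (\<Sum>i\<in>I. if P i then c i else 0)"
    by (rule sum.cong) auto
  also have "\<dots> = (\<Sum>i\<in>{i\<in>I. P i}. c i)" using f by (simp add: sum.inter_filter)
  finally show ?thesis .
qed

lemma reindex_helper:
  fixes N :: nat
  assumes "bij_betw f {0..<N} B"
  shows "(\<Sum>i\<in>{i. i < N \<and> P (f i)}. g (f i)) = (\<Sum>y\<in>{y\<in>B. P y}. g y)"
proof -
  have inj: "inj_on f {0..<N}" and img: "f ` {0..<N} = B" using assms by (auto simp: bij_betw_def)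
  have "inj_on f {i. i < N \<and> P (f i)}" by (rule inj_on_subset[OF inj]) auto
  moreover have "f ` {i. i < N \<and> P (f i)} = {y\<in>B. P y}" using img by auto
  ultimately have "bij_betw f {i. i < N \<and> P (f i)} {y\<in>B. P y}" by (simp add: bij_betw_def)
  then show ?thesis by (rule sum.reindex_bij_betw)
qed

lemma finite_subseq:
  fixes f :: "nat \<Rightarrow> 'k \<Rightarrow> real"
  assumes "finite K" "\<forall>k\<in>K. bounded (range (\<lambda>n. f n k))"
  shows "\<exists>r. strict_mono r \<and> (\<forall>k\<in>K. convergent (\<lambda>n. f (r n) k))"
  using assms
proof (induction K rule: finite_induct)
  case empty
  then show ?case by (auto intro: strict_mono_id)
next
  case (insert k K)
  then obtain r where r: "strict_mono r" "\<forall>k\<in>K. convergent (\<lambda>n. f (r n) k)" by auto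
  have "bounded (range (\<lambda>n. f (r n) k))"
    using insert.prems by (rule_tac bounded_subset[of "range (\<lambda>n. f n k)"]) auto
  then obtain l r' where r': "strict_mono r'" "((\<lambda>n. f (r n) k) \<circ> r') \<longlonglongrightarrow> l"
    using bounded_imp_convergent_subsequence by blast
  have "strict_mono (r \<circ> r')" using r r' by (simp add: strict_mono_o)
  moreover have "convergent (\<lambda>n. f ((r \<circ> r') n) k)"
    using r'(2) by (auto simp: convergent_def o_def)
  moreover have "convergent (\<lambda>n. f ((r \<circ> r') n) k')" if "k' \<in> K" for k'
    using convergent_subseq_convergent[OF r(2)[rule_format, OF that] r'(1)] by (simp add: o_def)
  ultimately show ?case
    by (intro exI[of _ "r \<circ> r'"] conjI ballI) (auto simp del: o_apply)
qed


lemma universe_Inl: "Inl s \<in> universe S E \<longleftrightarrow> s \<in> S"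
  by (auto simp: universe_def)

lemma universe_Inr: "Inr e \<in> universe S E \<longleftrightarrow> e \<in> E"
  by (auto simp: universe_def)

lemma card_Inl: "card (S \<inter> {s. Inl s \<in> T}) = card (T \<inter> Inl ` S)"
proof -
  have "Inl ` (S \<inter> {s. Inl s \<in> T}) = T \<inter> Inl ` S" by auto
  moreover have "card (Inl ` (S \<inter> {s. Inl s \<in> T})) = card (S \<inter> {s. Inl s \<in> T})"
    by (rule card_image) (simp add: inj_on_def)
  ultimately show ?thesis by (metis)
qed

lemma sum_zero_each:
  fixes f :: "'a \<Rightarrow> real"
  shows "sum f A = 0 \<Longrightarrow> finite A \<Longrightarrow> (\<And>x. x\<in>A \<Longrightarrow> 0 \<le> f x) \<Longrightarrow> x \<in> A \<Longrightarrow> f x = 0"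
  using sum_nonneg_eq_0_iff[of A f] by blast

lemma decomp:
  assumes fS: "finite S" and fE: "finite E"
    and aa: "almost_atomic S E h" and ct: "C_T S E tal hed Orig h" and ci: "C_I S h"
  shows "\<exists>w. (\<forall>T. 0 \<le> w T) \<and>
    (\<forall>e\<in>E. (\<Sum>T\<in>{T. routing_subnetwork S E tal hed Orig T \<and> Inr e \<in> T}. w T) \<le> h {Inr e}) \<and>
    (\<forall>s\<in>S. \<forall>u. mutual h {Inl s} (in_node S E hed Orig u) \<le>
       (\<Sum>T\<in>{T. routing_subnetwork S E tal hed Orig T \<and> Inl s \<in> T \<and> in_node S E hed Orig u \<inter> T \<noteq> {}}. w T))"
proof -
  define U where "U = universe S E"
  have fU: "finite U" using fS fE by (simp add: U_def finite_universe)
  from aa have "\<exists>(m::nat) a c. (\<forall>i<m. atomic S E (a i) \<and> c i \<ge> 0) \<and>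
      (\<forall>\<beta>\<subseteq>U. h \<beta> = (\<Sum>i<m. c i * a i \<beta>))"
    unfolding almost_atomic_def U_def .
  then obtain m :: nat and a c where ac: "\<forall>i<m. atomic S E (a i) \<and> c i \<ge> 0"
    and hs: "\<forall>\<beta>\<subseteq>U. h \<beta> = (\<Sum>i<m. c i * a i \<beta>)"
    by blast
  have "\<forall>i\<in>{..<m}. \<exists>T. T \<subseteq> U \<and> (\<forall>\<beta>\<subseteq>U. a i \<beta> = (if \<beta> \<inter> T \<noteq> {} then 1 else 0))"
  proof
    fix i assume "i \<in> {..<m}"
    then have "atomic S E (a i)" using ac by simp
    then show "\<exists>T. T \<subseteq> U \<and> (\<forall>\<beta>\<subseteq>U. a i \<beta> = (if \<beta> \<inter> T \<noteq> {} then 1 else 0))"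
      unfolding atomic_def U_def by blast
  qed
  then obtain Tf where Tf0: "\<forall>i\<in>{..<m}. Tf i \<subseteq> U \<and> (\<forall>\<beta>\<subseteq>U. a i \<beta> = (if \<beta> \<inter> Tf i \<noteq> {} then 1 else 0))"
    by (rule bchoice [THEN exE])
  have TU: "Tf i \<subseteq> U" if "i<m" for i using Tf0 that by simp
  have aT: "a i \<beta> = of_bool (\<beta> \<inter> Tf i \<noteq> {})" if "i<m" "\<beta> \<subseteq> U" for i \<beta>
    using Tf0 that by simp
  define g where "g = (\<lambda>\<beta>. (\<Sum>i<m. c i * of_bool (\<beta> \<inter> Tf i \<noteq> {})))"
  have c0: "0 \<le> c i" if "i<m" for i using ac that by blast
  have hg: "h \<beta> = g \<beta>" if b: "\<beta> \<subseteq> U" for \<beta>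
  proof -
    have "h \<beta> = (\<Sum>i<m. c i * a i \<beta>)" using hs b by blast
    also have "\<dots> = g \<beta>" unfolding g_def
      by (rule sum.cong) (simp_all add: aT b)
    finally show ?thesis .
  qed
  have ctc: "in_edge S E tal hed Orig e \<inter> Tf i \<noteq> {}"
    if e: "e\<in>E" and i: "i<m" "0 < c i" and ein: "Inr e \<in> Tf i" for e i
  proof (rule ccontr)
    assume emp: "\<not> in_edge S E tal hed Orig e \<inter> Tf i \<noteq> {}"
    define I where "I = in_edge S E tal hed Orig e"
    have IU: "I \<subseteq> U" unfolding I_def U_def by (rule in_edge_sub)
    have eU: "{Inr e} \<union> I \<subseteq> U" using IU e by (simp add: U_def universe_Inr)
    have "h ({Inr e} \<union> I) - h I = 0" using ct e unfolding C_T_def I_def by blast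
    then have "g ({Inr e} \<union> I) - g I = 0" using hg[OF IU] hg[OF eU] by simp
    moreover have "g ({Inr e} \<union> I) - g I = (\<Sum>j<m. c j * (of_bool (({Inr e} \<union> I) \<inter> Tf j \<noteq> {}) - of_bool (I \<inter> Tf j \<noteq> {})))"
      unfolding g_def by (simp only: sum_subtractf[symmetric] right_diff_distrib)
    ultimately have z: "(\<Sum>j<m. c j * (of_bool (({Inr e} \<union> I) \<inter> Tf j \<noteq> {}) - of_bool (I \<inter> Tf j \<noteq> {}))) = 0"
      by simp
    have nn: "0 \<le> c j * (of_bool (({Inr e} \<union> I) \<inter> Tf j \<noteq> {}) - of_bool (I \<inter> Tf j \<noteq> {}))"
      if "j \<in> {..<m}" for j
    proof -
      have "of_bool (I \<inter> Tf j \<noteq> {}) \<le> (of_bool (({Inr e} \<union> I) \<inter> Tf j \<noteq> {}) :: real)"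
        by (cases "I \<inter> Tf j = {}") auto
      then show ?thesis using c0 that by simp
    qed
    have "c i * (of_bool (({Inr e} \<union> I) \<inter> Tf i \<noteq> {}) - of_bool (I \<inter> Tf i \<noteq> {})) = 0"
      by (rule sum_zero_each[OF z], simp, erule nn, simp add: i)
    moreover have "({Inr e} \<union> I) \<inter> Tf i \<noteq> {}" using ein by blast
    moreover have "I \<inter> Tf i = {}" using emp I_def by simp
    ultimately show False using i by simp
  qed
  have cic: "card (Tf i \<inter> Inl ` S) \<le> 1" if i: "i<m" "0 < c i" for i
  proof -
    have SU: "Inl ` S \<subseteq> U" by (auto simp: U_def universe_def)
    have "h (Inl ` S) = (\<Sum>s\<in>S. h {Inl s})" using ci unfolding C_I_def .
    also have "\<dots> = (\<Sum>s\<in>S. g {Inl s})"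
      by (rule sum.cong) (auto intro!: hg simp: U_def universe_def)
    finally have eq: "g (Inl ` S) = (\<Sum>s\<in>S. g {Inl s})" using hg[OF SU] by simp
    have cardsum: "(\<Sum>s\<in>S. of_bool (Inl s \<in> Tf j)) = real (card (Tf j \<inter> Inl ` S))" for j
      using fS by (simp add: card_Inl)
    have "(\<Sum>s\<in>S. g {Inl s}) = (\<Sum>s\<in>S. \<Sum>j<m. c j * of_bool (Inl s \<in> Tf j))"
      unfolding g_def by (rule sum.cong) auto
    also have "\<dots> = (\<Sum>j<m. \<Sum>s\<in>S. c j * of_bool (Inl s \<in> Tf j))"
      by (rule sum.swap)
    also have "\<dots> = (\<Sum>j<m. c j * real (card (Tf j \<inter> Inl ` S)))"
      by (rule sum.cong) (simp_all add: sum_distrib_left[symmetric] cardsum)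
    finally have e2: "(\<Sum>s\<in>S. g {Inl s}) = (\<Sum>j<m. c j * real (card (Tf j \<inter> Inl ` S)))" .
    have e3: "g (Inl ` S) = (\<Sum>j<m. c j * of_bool (Tf j \<inter> Inl ` S \<noteq> {}))"
      unfolding g_def by (simp add: Int_commute)
    have z: "(\<Sum>j<m. c j * (real (card (Tf j \<inter> Inl ` S)) - of_bool (Tf j \<inter> Inl ` S \<noteq> {}))) = 0"
      using eq e2 e3 by (simp add: sum_subtractf right_diff_distrib)
    have nn: "0 \<le> c j * (real (card (Tf j \<inter> Inl ` S)) - of_bool (Tf j \<inter> Inl ` S \<noteq> {}))"
      if "j \<in> {..<m}" for j
    proof -
      have fin: "finite (Tf j \<inter> Inl ` S)" using TU[of j] that fU by (auto intro: finite_subset)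
      have "of_bool (Tf j \<inter> Inl ` S \<noteq> {}) \<le> real (card (Tf j \<inter> Inl ` S))"
      proof (cases "Tf j \<inter> Inl ` S = {}")
        case False
        then have "card (Tf j \<inter> Inl ` S) > 0" using fin by (simp add: card_gt_0_iff)
        then show ?thesis using False by simp
      qed simp
      then show ?thesis using c0 that by simp
    qed
    have "c i * (real (card (Tf i \<inter> Inl ` S)) - of_bool (Tf i \<inter> Inl ` S \<noteq> {})) = 0"
      by (rule sum_zero_each[OF z], simp, erule nn, simp add: i)
    then have "real (card (Tf i \<inter> Inl ` S)) = of_bool (Tf i \<inter> Inl ` S \<noteq> {})" using i by simp
    then show ?thesis by (cases "Tf i \<inter> Inl ` S = {}") simp_all
  qed
  define G where "G = {i. i<m \<and> 0 < c i \<and> routing_subnetwork S E tal hed Orig (Tf i)}"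
  have rsG: "routing_subnetwork S E tal hed Orig (Tf i)"
    if i: "i<m" "0 < c i" and si: "Inl s \<in> Tf i" and s: "s \<in> S" for i s
  proof -
    have ne: "Tf i \<inter> Inl ` S \<noteq> {}" using si s by blast
    have fin: "finite (Tf i \<inter> Inl ` S)" using TU[OF i(1)] fU by (auto intro: finite_subset)
    have "card (Tf i \<inter> Inl ` S) > 0" using ne fin by (simp add: card_gt_0_iff)
    with cic[OF i] have c1: "card (Tf i \<inter> Inl ` S) = 1" by simp
    have "\<forall>e\<in>E. Inr e \<in> Tf i \<longrightarrow> in_edge S E tal hed Orig e \<inter> Tf i \<noteq> {}"
      using ctc i by blast
    then show ?thesis unfolding routing_subnetwork_def using TU[OF i(1)] c1 by (simp add: U_def)
  qed
  define w where "w = (\<lambda>T. (\<Sum>i\<in>{i\<in>G. Tf i = T}. c i))"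
  have fG: "finite G" unfolding G_def by simp
  have regroup: "(\<Sum>T\<in>{T. routing_subnetwork S E tal hed Orig T \<and> P T}. w T) = (\<Sum>i\<in>{i\<in>G. P (Tf i)}. c i)" for P
  proof -
    have "(\<Sum>i\<in>{i\<in>G. P (Tf i)}. c i) =
      (\<Sum>T\<in>{T. routing_subnetwork S E tal hed Orig T \<and> P T}. \<Sum>i\<in>{x. x \<in> {i\<in>G. P (Tf i)} \<and> Tf x = T}. c i)"
      by (rule sum.group[symmetric]) (auto simp: G_def intro: finite_RS fS fE)
    also have "\<dots> = (\<Sum>T\<in>{T. routing_subnetwork S E tal hed Orig T \<and> P T}. w T)"
      unfolding w_def by (rule sum.cong) (auto intro!: sum.cong)
    finally show ?thesis by simp
  qed
  show ?thesis
  proof (intro exI[of _ w] conjI ballI allI)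
    show "0 \<le> w T" for T unfolding w_def by (rule sum_nonneg) (auto simp: G_def)
  next
    fix e assume e: "e \<in> E"
    have "(\<Sum>T\<in>{T. routing_subnetwork S E tal hed Orig T \<and> Inr e \<in> T}. w T) = (\<Sum>i\<in>{i\<in>G. Inr e \<in> Tf i}. c i)"
      by (rule regroup)
    also have "\<dots> \<le> (\<Sum>i\<in>{i\<in>{..<m}. Inr e \<in> Tf i}. c i)"
      by (rule sum_mono2) (auto simp: G_def c0)
    also have "\<dots> = (\<Sum>i<m. c i * of_bool (Inr e \<in> Tf i))" by (rule sum_ind[symmetric]) simp
    also have "\<dots> = g {Inr e}" unfolding g_def by simp
    also have "\<dots> = h {Inr e}" using hg[of "{Inr e}"] e by (simp add: U_def universe_Inr)
    finally show "(\<Sum>T\<in>{T. routing_subnetwork S E tal hed Orig T \<and> Inr e \<in> T}. w T) \<le> h {Inr e}" .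
  next
    fix s u assume s: "s \<in> S"
    define I where "I = in_node S E hed Orig u"
    have IU: "I \<subseteq> U" unfolding I_def U_def by (rule in_node_sub)
    have sU: "{Inl s} \<subseteq> U" using s by (simp add: U_def universe_Inl)
    have "mutual h {Inl s} I = mutual g {Inl s} I"
      by (rule mutual_cong[of U]) (use hg IU sU in auto)
    also have "\<dots> = (\<Sum>i<m. c i * of_bool ({Inl s} \<inter> Tf i \<noteq> {} \<and> I \<inter> Tf i \<noteq> {}))"
      unfolding g_def by (rule mutual_ind)
    also have "\<dots> = (\<Sum>i<m. c i * of_bool (Inl s \<in> Tf i \<and> I \<inter> Tf i \<noteq> {}))" by simp
    also have "\<dots> = (\<Sum>i\<in>{i\<in>{..<m}. Inl s \<in> Tf i \<and> I \<inter> Tf i \<noteq> {}}. c i)" by (rule sum_ind) simp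
    also have "\<dots> = (\<Sum>i\<in>{i\<in>G. Inl s \<in> Tf i \<and> I \<inter> Tf i \<noteq> {}}. c i)"
    proof (rule sum.mono_neutral_right)
      show "finite {i\<in>{..<m}. Inl s \<in> Tf i \<and> I \<inter> Tf i \<noteq> {}}" by simp
      show "{i\<in>G. Inl s \<in> Tf i \<and> I \<inter> Tf i \<noteq> {}} \<subseteq> {i\<in>{..<m}. Inl s \<in> Tf i \<and> I \<inter> Tf i \<noteq> {}}"
        by (auto simp: G_def)
      show "\<forall>i\<in>{i\<in>{..<m}. Inl s \<in> Tf i \<and> I \<inter> Tf i \<noteq> {}} - {i\<in>G. Inl s \<in> Tf i \<and> I \<inter> Tf i \<noteq> {}}. c i = 0"
      proof
        fix i assume "i \<in> {i\<in>{..<m}. Inl s \<in> Tf i \<and> I \<inter> Tf i \<noteq> {}} - {i\<in>G. Inl s \<in> Tf i \<and> I \<inter> Tf i \<noteq> {}}"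
        then have i: "i < m" "Inl s \<in> Tf i" "i \<notin> G" by auto
        show "c i = 0"
        proof (rule ccontr)
          assume "c i \<noteq> 0"
          then have "0 < c i" using c0[OF i(1)] by simp
          with rsG[OF i(1) this i(2) s] i show False by (simp add: G_def)
        qed
      qed
    qed
    also have "\<dots> = (\<Sum>T\<in>{T. routing_subnetwork S E tal hed Orig T \<and> Inl s \<in> T \<and> I \<inter> T \<noteq> {}}. w T)"
      by (rule regroup[symmetric])
    finally show "mutual h {Inl s} (in_node S E hed Orig u) \<le>
       (\<Sum>T\<in>{T. routing_subnetwork S E tal hed Orig T \<and> Inl s \<in> T \<and> in_node S E hed Orig u \<inter> T \<noteq> {}}. w T)"
      unfolding I_def by simp
  qed
qed


lemma sing_int: "({x} \<inter> A \<noteq> {}) = (x \<in> A)"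
  by auto

lemma forward:
  fixes S :: "'s set" and E :: "'e set" and lam :: "'s \<Rightarrow> real" and om :: "'e \<Rightarrow> real"
  assumes fS: "finite S" and za: "zero_achievable_routing E tal hed S Orig D lam om"
  shows "(lam, om) \<in> CL S E (proj_star S E hed Orig D `
        {h. almost_atomic S E h \<and> C_T S E tal hed Orig h \<and> C_I S h})"
proof -
  from za have "\<exists>(n::nat) (T :: nat \<Rightarrow> ('s + 'e) set) (c :: nat \<Rightarrow> real).
        (\<forall>i<n. routing_subnetwork S E tal hed Orig (T i) \<and> c i \<ge> 0) \<and>
        (\<forall>e\<in>E. om e \<ge> (\<Sum>i\<in>{i. i < n \<and> Inr e \<in> T i}. c i)) \<and>
        (\<forall>s\<in>S. \<forall>u\<in>D s. lam s \<le>
            (\<Sum>i\<in>{i. i < n \<and> in_node S E hed Orig u \<inter> T i \<noteq> {} \<and> nu (T i) = s}. c i))"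
    unfolding zero_achievable_routing_def .
  then obtain n :: nat and T :: "nat \<Rightarrow> ('s + 'e) set" and c :: "nat \<Rightarrow> real" where
    rs: "\<forall>i<n. routing_subnetwork S E tal hed Orig (T i) \<and> c i \<ge> 0"
    and r1: "\<forall>e\<in>E. om e \<ge> (\<Sum>i\<in>{i. i < n \<and> Inr e \<in> T i}. c i)"
    and r2: "\<forall>s\<in>S. \<forall>u\<in>D s. lam s \<le>
            (\<Sum>i\<in>{i. i < n \<and> in_node S E hed Orig u \<inter> T i \<noteq> {} \<and> nu (T i) = s}. c i)"
    by blast
  have rsi: "routing_subnetwork S E tal hed Orig (T i)" if "i < n" for i using rs that by blast
  have c0: "0 \<le> c i" if "i < n" for i using rs that by blast
  define h where "h = (\<lambda>\<beta>. \<Sum>i<n. c i * of_bool (\<beta> \<inter> T i \<noteq> {}))"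
  have aa: "almost_atomic S E h"
  proof -
    have A: "\<forall>i<n. atomic S E (\<lambda>\<beta>. of_bool (\<beta> \<inter> T i \<noteq> {})) \<and> 0 \<le> c i"
    proof (intro allI impI conjI)
      fix i assume i: "i < n"
      show "0 \<le> c i" by (rule c0[OF i])
      show "atomic S E (\<lambda>\<beta>. of_bool (\<beta> \<inter> T i \<noteq> {}))"
        unfolding atomic_def
        by (rule exI[of _ "T i"]) (simp add: rs_sub[OF rsi[OF i]])
    qed
    have B: "\<forall>\<beta>\<subseteq>universe S E. h \<beta> = (\<Sum>i<n. c i * of_bool (\<beta> \<inter> T i \<noteq> {}))"
      by (simp add: h_def)
    show ?thesis unfolding almost_atomic_def
      by (rule exI[of _ n], rule exI[of _ "\<lambda>i \<beta>. of_bool (\<beta> \<inter> T i \<noteq> {})"], rule exI[of _ c])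
        (rule conjI[OF A B])
  qed
  have ct: "C_T S E tal hed Orig h"
    unfolding C_T_def
  proof
    fix e assume e: "e \<in> E"
    define I where "I = in_edge S E tal hed Orig e"
    have "h ({Inr e} \<union> I) - h I = (\<Sum>j<n. c j * (of_bool (({Inr e} \<union> I) \<inter> T j \<noteq> {}) - of_bool (I \<inter> T j \<noteq> {})))"
      unfolding h_def by (simp only: sum_subtractf[symmetric] right_diff_distrib)
    also have "\<dots> = 0"
    proof (rule sum.neutral, rule ballI)
      fix j assume j: "j \<in> {..<n}"
      show "c j * (of_bool (({Inr e} \<union> I) \<inter> T j \<noteq> {}) - of_bool (I \<inter> T j \<noteq> {})) = 0"
      proof (cases "Inr e \<in> T j")
        case True
        then have "I \<inter> T j \<noteq> {}" using rsi[of j] j e unfolding routing_subnetwork_def I_def by simp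
        moreover have "({Inr e} \<union> I) \<inter> T j \<noteq> {}" using True by blast
        ultimately show ?thesis by simp
      next
        case False
        then have "({Inr e} \<union> I) \<inter> T j = I \<inter> T j" by blast
        then show ?thesis by simp
      qed
    qed
    finally show "h ({Inr e} \<union> in_edge S E tal hed Orig e) - h (in_edge S E tal hed Orig e) = 0"
      unfolding I_def .
  qed
  have ne: "Inl ` S \<inter> T i \<noteq> {}" if i: "i < n" for i
  proof
    assume "Inl ` S \<inter> T i = {}"
    then have "T i \<inter> Inl ` S = {}" by blast
    with rsi[OF i] show False unfolding routing_subnetwork_def by simp
  qed
  have ci: "C_I S h"
    unfolding C_I_def
  proof -
    have "h (Inl ` S) = (\<Sum>i<n. c i)" unfolding h_def
      by (rule sum.cong) (simp_all add: ne)
    moreover have "(\<Sum>s\<in>S. h {Inl s}) = (\<Sum>i<n. c i)"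
    proof -
      have "(\<Sum>s\<in>S. h {Inl s}) = (\<Sum>s\<in>S. \<Sum>i<n. c i * of_bool (Inl s \<in> T i))"
        unfolding h_def by (simp only: sing_int)
      also have "\<dots> = (\<Sum>i<n. \<Sum>s\<in>S. c i * of_bool (Inl s \<in> T i))"
        by (rule sum.swap)
      also have "\<dots> = (\<Sum>i<n. c i)"
      proof (rule sum.cong[OF refl])
        fix i assume i: "i \<in> {..<n}"
        have "(\<Sum>s\<in>S. of_bool (Inl s \<in> T i)) = real (card (T i \<inter> Inl ` S))"
          using fS by (simp add: card_Inl)
        also have "\<dots> = 1" using rsi[of i] i unfolding routing_subnetwork_def by simp
        finally show "(\<Sum>s\<in>S. c i * of_bool (Inl s \<in> T i)) = c i"
          by (simp add: sum_distrib_left[symmetric])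
      qed
      finally show ?thesis .
    qed
    ultimately show "h (Inl ` S) = (\<Sum>s\<in>S. h {Inl s})" by simp
  qed
  define p where "p = proj_star S E hed Orig D h"
  have mem: "p \<in> proj_star S E hed Orig D ` {h. almost_atomic S E h \<and> C_T S E tal hed Orig h \<and> C_I S h}"
    unfolding p_def using aa ct ci by blast
  have edge: "\<forall>e\<in>E. \<exists>L. ((\<lambda>k. (1::real) * snd p e) \<longlonglongrightarrow> L) \<and> L \<le> om e"
  proof
    fix e assume e: "e \<in> E"
    have "snd p e = h {Inr e}" by (simp add: p_def proj_star_def)
    also have "\<dots> = (\<Sum>i<n. c i * of_bool (Inr e \<in> T i))" unfolding h_def by (simp only: sing_int)
    also have "\<dots> = (\<Sum>i\<in>{i\<in>{..<n}. Inr e \<in> T i}. c i)" by (rule sum_ind) simp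
    also have "\<dots> \<le> om e" using r1 e by simp
    finally show "\<exists>L. ((\<lambda>k. (1::real) * snd p e) \<longlonglongrightarrow> L) \<and> L \<le> om e" by auto
  qed
  have src: "\<forall>s\<in>S. \<exists>L. ((\<lambda>k. ereal 1 * fst p s) \<longlonglongrightarrow> L) \<and> L \<ge> ereal (lam s)"
  proof
    fix s assume s: "s \<in> S"
    have "ereal (lam s) \<le> fst p s"
      unfolding p_def proj_star_def fst_conv
    proof (rule INF_greatest)
      fix u assume u: "u \<in> D s"
      define I where "I = in_node S E hed Orig u"
      have "mutual h {Inl s} I = (\<Sum>i<n. c i * of_bool ({Inl s} \<inter> T i \<noteq> {} \<and> I \<inter> T i \<noteq> {}))"
        unfolding h_def by (rule mutual_ind)
      also have "\<dots> = (\<Sum>i<n. c i * of_bool (Inl s \<in> T i \<and> I \<inter> T i \<noteq> {}))" by (simp only: sing_int)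
      also have "\<dots> = (\<Sum>i\<in>{i\<in>{..<n}. Inl s \<in> T i \<and> I \<inter> T i \<noteq> {}}. c i)" by (rule sum_ind) simp
      also have "{i\<in>{..<n}. Inl s \<in> T i \<and> I \<inter> T i \<noteq> {}} = {i. i < n \<and> I \<inter> T i \<noteq> {} \<and> nu (T i) = s}"
      proof (rule set_eqI, rule iffI)
        fix i assume "i \<in> {i\<in>{..<n}. Inl s \<in> T i \<and> I \<inter> T i \<noteq> {}}"
        then have i: "i < n" "Inl s \<in> T i" "I \<inter> T i \<noteq> {}" by auto
        then show "i \<in> {i. i < n \<and> I \<inter> T i \<noteq> {} \<and> nu (T i) = s}"
          using rs_nu[OF rsi[OF i(1)] i(2)] by simp
      next
        fix i assume "i \<in> {i. i < n \<and> I \<inter> T i \<noteq> {} \<and> nu (T i) = s}"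
        then have i: "i < n" "I \<inter> T i \<noteq> {}" "nu (T i) = s" by auto
        have "Inl (nu (T i)) \<in> T i" using rs_nu_in[OF rsi[OF i(1)]] by simp
        then show "i \<in> {i\<in>{..<n}. Inl s \<in> T i \<and> I \<inter> T i \<noteq> {}}" using i by simp
      qed
      finally have "mutual h {Inl s} I = (\<Sum>i\<in>{i. i < n \<and> I \<inter> T i \<noteq> {} \<and> nu (T i) = s}. c i)" .
      moreover have "lam s \<le> (\<Sum>i\<in>{i. i < n \<and> I \<inter> T i \<noteq> {} \<and> nu (T i) = s}. c i)"
        using r2 s u unfolding I_def by blast
      ultimately show "ereal (lam s) \<le> ereal (mutual h {Inl s} (in_node S E hed Orig u))"
        unfolding I_def by simp
    qed
    then show "\<exists>L. ((\<lambda>k. ereal 1 * fst p s) \<longlonglongrightarrow> L) \<and> L \<ge> ereal (lam s)"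
      by (intro exI[of _ "fst p s"]) simp
  qed
  have "\<exists>(seq :: nat \<Rightarrow> ('s \<Rightarrow> ereal) \<times> ('e \<Rightarrow> real)) (cc :: nat \<Rightarrow> real).
      (\<forall>k. seq k \<in> proj_star S E hed Orig D ` {h. almost_atomic S E h \<and> C_T S E tal hed Orig h \<and> C_I S h} \<and> cc k > 0) \<and>
      (\<forall>e\<in>E. \<exists>L. ((\<lambda>k. cc k * snd (seq k) e) \<longlonglongrightarrow> L) \<and> L \<le> om e) \<and>
      (\<forall>s\<in>S. \<exists>L. ((\<lambda>k. ereal (cc k) * fst (seq k) s) \<longlonglongrightarrow> L) \<and> L \<ge> ereal (lam s))"
    by (rule exI[of _ "\<lambda>k. p"], rule exI[of _ "\<lambda>k. 1"]) (use mem edge src in simp)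
  then show ?thesis unfolding CL_def by (simp only: mem_Collect_eq case_prod_conv)
qed


lemma backward:
  fixes S :: "'s set" and E :: "'e set" and lam :: "'s \<Rightarrow> real" and om :: "'e \<Rightarrow> real"
  assumes fS: "finite S" and fE: "finite E" and lam0: "\<forall>s\<in>S. lam s \<ge> 0"
    and cl: "(lam, om) \<in> CL S E (proj_star S E hed Orig D `
        {h. almost_atomic S E h \<and> C_T S E tal hed Orig h \<and> C_I S h})"
  shows "zero_achievable_routing E tal hed S Orig D lam om"
proof -
  define A where "A = {h. almost_atomic S E h \<and> C_T S E tal hed Orig h \<and> C_I S h}"
  define P where "P = proj_star S E hed Orig D"
  have "\<exists>(seq :: nat \<Rightarrow> ('s \<Rightarrow> ereal) \<times> ('e \<Rightarrow> real)) (c :: nat \<Rightarrow> real).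
      (\<forall>n. seq n \<in> P ` A \<and> c n > 0) \<and>
      (\<forall>e\<in>E. \<exists>L. ((\<lambda>n. c n * snd (seq n) e) \<longlonglongrightarrow> L) \<and> L \<le> om e) \<and>
      (\<forall>s\<in>S. \<exists>L. ((\<lambda>n. ereal (c n) * fst (seq n) s) \<longlonglongrightarrow> L) \<and> L \<ge> ereal (lam s))"
    using cl unfolding CL_def A_def P_def by (simp only: mem_Collect_eq case_prod_conv)
  then obtain seq :: "nat \<Rightarrow> ('s \<Rightarrow> ereal) \<times> ('e \<Rightarrow> real)" and c :: "nat \<Rightarrow> real" where
    sq: "\<forall>n. seq n \<in> P ` A \<and> c n > 0"
    and ed: "\<forall>e\<in>E. \<exists>L. ((\<lambda>n. c n * snd (seq n) e) \<longlonglongrightarrow> L) \<and> L \<le> om e"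
    and so: "\<forall>s\<in>S. \<exists>L. ((\<lambda>n. ereal (c n) * fst (seq n) s) \<longlonglongrightarrow> L) \<and> L \<ge> ereal (lam s)"
    by blast
  have cpos: "0 < c n" for n using sq by blast
  have "\<forall>n. \<exists>h. seq n = P h \<and> h \<in> A"
  proof
    fix n
    have "seq n \<in> P ` A" using sq by blast
    then obtain h where "h \<in> A" "seq n = P h" by (rule imageE)
    then show "\<exists>h. seq n = P h \<and> h \<in> A" by blast
  qed
  then obtain hh where hh: "\<forall>n. seq n = P (hh n) \<and> hh n \<in> A" by (rule choice [THEN exE])
  have hhA: "almost_atomic S E (hh n)" "C_T S E tal hed Orig (hh n)" "C_I S (hh n)" for n
    using hh unfolding A_def by auto
  have "\<forall>n. \<exists>w. (\<forall>T. 0 \<le> w T) \<and>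
    (\<forall>e\<in>E. (\<Sum>T\<in>{T. routing_subnetwork S E tal hed Orig T \<and> Inr e \<in> T}. w T) \<le> hh n {Inr e}) \<and>
    (\<forall>s\<in>S. \<forall>u. mutual (hh n) {Inl s} (in_node S E hed Orig u) \<le>
       (\<Sum>T\<in>{T. routing_subnetwork S E tal hed Orig T \<and> Inl s \<in> T \<and> in_node S E hed Orig u \<inter> T \<noteq> {}}. w T))"
  proof
    fix n show "\<exists>w. (\<forall>T. 0 \<le> w T) \<and>
    (\<forall>e\<in>E. (\<Sum>T\<in>{T. routing_subnetwork S E tal hed Orig T \<and> Inr e \<in> T}. w T) \<le> hh n {Inr e}) \<and>
    (\<forall>s\<in>S. \<forall>u. mutual (hh n) {Inl s} (in_node S E hed Orig u) \<le>
       (\<Sum>T\<in>{T. routing_subnetwork S E tal hed Orig T \<and> Inl s \<in> T \<and> in_node S E hed Orig u \<inter> T \<noteq> {}}. w T))"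
      by (rule decomp[OF fS fE hhA(1) hhA(2) hhA(3)])
  qed
  then obtain w where w: "\<forall>n. (\<forall>T. 0 \<le> w n T) \<and>
    (\<forall>e\<in>E. (\<Sum>T\<in>{T. routing_subnetwork S E tal hed Orig T \<and> Inr e \<in> T}. w n T) \<le> hh n {Inr e}) \<and>
    (\<forall>s\<in>S. \<forall>u. mutual (hh n) {Inl s} (in_node S E hed Orig u) \<le>
       (\<Sum>T\<in>{T. routing_subnetwork S E tal hed Orig T \<and> Inl s \<in> T \<and> in_node S E hed Orig u \<inter> T \<noteq> {}}. w n T))"
    by (rule choice [THEN exE])
  have w0: "0 \<le> w n T" for n T using w by blast
  have wE: "(\<Sum>T\<in>{T. routing_subnetwork S E tal hed Orig T \<and> Inr e \<in> T}. w n T) \<le> hh n {Inr e}"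
    if "e \<in> E" for n e using w that by blast
  have wS: "mutual (hh n) {Inl s} (in_node S E hed Orig u) \<le>
       (\<Sum>T\<in>{T. routing_subnetwork S E tal hed Orig T \<and> Inl s \<in> T \<and> in_node S E hed Orig u \<inter> T \<noteq> {}}. w n T)"
    if "s \<in> S" for n s u using w that by blast
  define W where "W = (\<lambda>n T. c n * w n T)"
  have W0: "0 \<le> W n T" for n T unfolding W_def using cpos[of n] w0[of n T] by simp
  have sndseq: "snd (seq n) e = hh n {Inr e}" for n e
    using hh by (simp add: P_def proj_star_def)
  have fstseq: "fst (seq n) s = (INF u\<in>D s. ereal (mutual (hh n) {Inl s} (in_node S E hed Orig u)))" for n s
    using hh by (simp add: P_def proj_star_def)
  have edgeb: "(\<Sum>T\<in>{T. routing_subnetwork S E tal hed Orig T \<and> Inr e \<in> T}. W n T) \<le> c n * snd (seq n) e"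
    if e: "e \<in> E" for n e
  proof -
    have "(\<Sum>T\<in>{T. routing_subnetwork S E tal hed Orig T \<and> Inr e \<in> T}. W n T)
        = c n * (\<Sum>T\<in>{T. routing_subnetwork S E tal hed Orig T \<and> Inr e \<in> T}. w n T)"
      unfolding W_def by (simp add: sum_distrib_left)
    also have "\<dots> \<le> c n * hh n {Inr e}"
      using wE[OF e, of n] cpos[of n] by (simp add: mult_left_mono)
    finally show ?thesis by (simp add: sndseq)
  qed
  have srcb: "ereal (c n) * fst (seq n) s \<le> ereal (\<Sum>T\<in>{T. routing_subnetwork S E tal hed Orig T \<and> Inl s \<in> T \<and> in_node S E hed Orig u \<inter> T \<noteq> {}}. W n T)"
    if s: "s \<in> S" and u: "u \<in> D s" for n s u
  proof -
    define m where "m = mutual (hh n) {Inl s} (in_node S E hed Orig u)"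
    define F where "F = {T. routing_subnetwork S E tal hed Orig T \<and> Inl s \<in> T \<and> in_node S E hed Orig u \<inter> T \<noteq> {}}"
    have "fst (seq n) s \<le> ereal m" unfolding fstseq m_def using u by (rule INF_lower)
    then have "ereal (c n) * fst (seq n) s \<le> ereal (c n) * ereal m"
      by (rule ereal_mult_left_mono) (use cpos[of n] in simp)
    also have "\<dots> = ereal (c n * m)" by simp
    also have "c n * m \<le> c n * (\<Sum>T\<in>F. w n T)"
      using wS[OF s, of n u] cpos[of n] unfolding m_def F_def by (simp add: mult_left_mono)
    then have "ereal (c n * m) \<le> ereal (\<Sum>T\<in>F. W n T)"
      unfolding W_def by (simp add: sum_distrib_left)
    finally show ?thesis unfolding F_def .
  qed
  define K where "K = {T. routing_subnetwork S E tal hed Orig T \<and> (\<exists>e\<in>E. Inr e \<in> T)}"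
  have fK: "finite K" unfolding K_def using fS fE by (rule finite_RS)
  have bnd: "\<forall>T\<in>K. bounded (range (\<lambda>n. W n T))"
  proof
    fix T assume T: "T \<in> K"
    then obtain e where e: "e \<in> E" "Inr e \<in> T" and rT: "routing_subnetwork S E tal hed Orig T"
      unfolding K_def by blast
    from ed e(1) obtain L where L: "(\<lambda>n. c n * snd (seq n) e) \<longlonglongrightarrow> L" by blast
    then have "Bseq (\<lambda>n. c n * snd (seq n) e)" by (intro convergent_imp_Bseq) (auto simp: convergent_def)
    then obtain B where B: "\<forall>n. norm (c n * snd (seq n) e) \<le> B" by (rule BseqE) blast
    have "\<bar>W n T\<bar> \<le> B" for n
    proof -
      have "W n T \<le> (\<Sum>T\<in>{T. routing_subnetwork S E tal hed Orig T \<and> Inr e \<in> T}. W n T)"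
        by (rule member_le_sum) (use e rT W0 finite_RS[OF fS fE] in auto)
      also have "\<dots> \<le> c n * snd (seq n) e" by (rule edgeb[OF e(1)])
      also have "\<dots> \<le> B" using B[rule_format, of n] by simp
      finally show ?thesis using W0[of n T] by simp
    qed
    then show "bounded (range (\<lambda>n. W n T))" unfolding bounded_real by blast
  qed
  obtain r where r: "strict_mono r" and conv: "\<forall>T\<in>K. convergent (\<lambda>n. W (r n) T)"
    using finite_subseq[OF fK bnd] by blast
  define X where "X = (\<lambda>T. lim (\<lambda>n. W (r n) T))"
  have XL: "(\<lambda>n. W (r n) T) \<longlonglongrightarrow> X T" if "T \<in> K" for T
    using conv that unfolding X_def by (simp add: convergent_LIMSEQ_iff)
  have X0: "0 \<le> X T" if "T \<in> K" for T
    by (rule LIMSEQ_le_const[OF XL[OF that]]) (use W0 in blast)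
  define Y where "Y = (\<lambda>T. if T \<in> K then X T else lam (nu T))"
  have Y0: "0 \<le> Y T" if "routing_subnetwork S E tal hed Orig T" for T
  proof (cases "T \<in> K")
    case True then show ?thesis using X0 by (simp add: Y_def)
  next
    case False
    have "nu T \<in> S" using rs_nu_in[OF that] by simp
    then show ?thesis using False lam0 by (simp add: Y_def)
  qed
  define RS where "RS = {T. routing_subnetwork S E tal hed Orig T}"
  have fRS: "finite RS" unfolding RS_def
    using finite_RS[OF fS fE, of tal hed Orig "\<lambda>_. True"] by simp
  obtain f where f: "bij_betw f {0..<card RS} RS" using ex_bij_betw_nat_finite[OF fRS] by blast
  have fi: "routing_subnetwork S E tal hed Orig (f i)" if "i < card RS" for i
    using bij_betwE[OF f] that unfolding RS_def by simp
  have G1: "\<forall>i<card RS. routing_subnetwork S E tal hed Orig (f i) \<and> Y (f i) \<ge> 0"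
    using fi Y0 by blast
  have G2: "\<forall>e\<in>E. om e \<ge> (\<Sum>i\<in>{i. i < card RS \<and> Inr e \<in> f i}. Y (f i))"
  proof
    fix e assume e: "e \<in> E"
    define F where "F = {T. routing_subnetwork S E tal hed Orig T \<and> Inr e \<in> T}"
    have FK: "F \<subseteq> K" unfolding F_def K_def using e by blast
    have fF: "finite F" unfolding F_def using fS fE by (rule finite_RS)
    have "(\<Sum>i\<in>{i. i < card RS \<and> Inr e \<in> f i}. Y (f i)) = (\<Sum>T\<in>{T\<in>RS. Inr e \<in> T}. Y T)"
      using reindex_helper[OF f, where P="\<lambda>y. Inr e \<in> y" and g=Y] by simp
    also have "{T\<in>RS. Inr e \<in> T} = F" unfolding RS_def F_def by simp
    also have "(\<Sum>T\<in>F. Y T) = (\<Sum>T\<in>F. X T)"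
      by (rule sum.cong) (use FK in \<open>auto simp: Y_def\<close>)
    finally have eq: "(\<Sum>i\<in>{i. i < card RS \<and> Inr e \<in> f i}. Y (f i)) = (\<Sum>T\<in>F. X T)" .
    from ed e obtain L where L: "(\<lambda>n. c n * snd (seq n) e) \<longlonglongrightarrow> L" and Lo: "L \<le> om e" by blast
    have L': "(\<lambda>n. c (r n) * snd (seq (r n)) e) \<longlonglongrightarrow> L"
      using LIMSEQ_subseq_LIMSEQ[OF L r] by (simp add: o_def)
    have S': "(\<lambda>n. \<Sum>T\<in>F. W (r n) T) \<longlonglongrightarrow> (\<Sum>T\<in>F. X T)"
      by (rule tendsto_sum) (use FK XL in blast)
    have "(\<Sum>T\<in>F. X T) \<le> L"
      by (rule LIMSEQ_le[OF S' L']) (use edgeb[OF e] in \<open>auto simp: F_def\<close>)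
    then show "om e \<ge> (\<Sum>i\<in>{i. i < card RS \<and> Inr e \<in> f i}. Y (f i))" using eq Lo by simp
  qed
  have G3: "\<forall>s\<in>S. \<forall>u\<in>D s. lam s \<le> (\<Sum>i\<in>{i. i < card RS \<and> in_node S E hed Orig u \<inter> f i \<noteq> {} \<and> nu (f i) = s}. Y (f i))"
  proof (intro ballI)
    fix s u assume s: "s \<in> S" and u: "u \<in> D s"
    define I where "I = in_node S E hed Orig u"
    define F where "F = {T\<in>RS. I \<inter> T \<noteq> {} \<and> nu T = s}"
    have fF: "finite F" unfolding F_def using fRS by simp
    have eq: "(\<Sum>i\<in>{i. i < card RS \<and> I \<inter> f i \<noteq> {} \<and> nu (f i) = s}. Y (f i)) = (\<Sum>T\<in>F. Y T)"
      unfolding F_def using reindex_helper[OF f, where P="\<lambda>y. I \<inter> y \<noteq> {} \<and> nu y = s" and g=Y] by simp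
    have FF: "F = {T. routing_subnetwork S E tal hed Orig T \<and> Inl s \<in> T \<and> I \<inter> T \<noteq> {}}"
    proof (rule set_eqI, rule iffI)
      fix T assume "T \<in> F"
      then have T: "routing_subnetwork S E tal hed Orig T" "I \<inter> T \<noteq> {}" "nu T = s"
        unfolding F_def RS_def by auto
      have "Inl (nu T) \<in> T" using rs_nu_in[OF T(1)] by simp
      then show "T \<in> {T. routing_subnetwork S E tal hed Orig T \<and> Inl s \<in> T \<and> I \<inter> T \<noteq> {}}"
        using T by simp
    next
      fix T assume "T \<in> {T. routing_subnetwork S E tal hed Orig T \<and> Inl s \<in> T \<and> I \<inter> T \<noteq> {}}"
      then have T: "routing_subnetwork S E tal hed Orig T" "Inl s \<in> T" "I \<inter> T \<noteq> {}" by auto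
      have "nu T = s" using rs_nu[OF T(1) T(2)] by simp
      then show "T \<in> F" using T unfolding F_def RS_def by simp
    qed
    have YF: "\<forall>T\<in>F. 0 \<le> Y T" using Y0 unfolding F_def RS_def by simp
    have "lam s \<le> (\<Sum>T\<in>F. Y T)"
    proof (cases "u \<in> Orig s")
      case True
      have inF: "{Inl s} \<in> F"
      proof -
        have "Inl s \<in> I" unfolding I_def in_node_def using True s by (simp add: universe_Inl)
        then have "I \<inter> {Inl s} \<noteq> {}" by blast
        then show ?thesis unfolding F_def RS_def using single_rs[OF s, where E=E and tal=tal and hed=hed and Orig=Orig] nu_single[of s] by simp
      qed
      have nK: "{Inl s} \<notin> K" unfolding K_def by simp
      have "lam s = Y {Inl s}" using nK by (simp add: Y_def nu_single)
      also have "\<dots> \<le> (\<Sum>T\<in>F. Y T)" by (rule member_le_sum[OF inF]) (use YF fF in auto)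
      finally show ?thesis .
    next
      case False
      have FK: "F \<subseteq> K"
      proof
        fix T assume T: "T \<in> F"
        then have rT: "routing_subnetwork S E tal hed Orig T" and IT: "I \<inter> T \<noteq> {}" and nT: "nu T = s"
          unfolding F_def RS_def by auto
        show "T \<in> K"
        proof (rule ccontr)
          assume "T \<notin> K"
          then have "\<not> (\<exists>e\<in>E. Inr e \<in> T)" using rT unfolding K_def by simp
          then have "T = {Inl (nu T)}" by (rule rs_noedge[OF rT])
          then have "T = {Inl s}" using nT by simp
          then have "Inl s \<in> I" using IT by simp
          then have "u \<in> Orig s" unfolding I_def in_node_def by simp
          with False show False by simp
        qed
      qed
      have eqX: "(\<Sum>T\<in>F. Y T) = (\<Sum>T\<in>F. X T)"
        by (rule sum.cong) (use FK in \<open>auto simp: Y_def\<close>)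
      from so s obtain L where L: "(\<lambda>n. ereal (c n) * fst (seq n) s) \<longlonglongrightarrow> L" and Ll: "L \<ge> ereal (lam s)"
        by blast
      have L': "(\<lambda>n. ereal (c (r n)) * fst (seq (r n)) s) \<longlonglongrightarrow> L"
        using LIMSEQ_subseq_LIMSEQ[OF L r] by (simp add: o_def)
      have S': "(\<lambda>n. \<Sum>T\<in>F. W (r n) T) \<longlonglongrightarrow> (\<Sum>T\<in>F. X T)"
        by (rule tendsto_sum) (use FK XL in blast)
      then have S'': "(\<lambda>n. ereal (\<Sum>T\<in>F. W (r n) T)) \<longlonglongrightarrow> ereal (\<Sum>T\<in>F. X T)"
        by (rule tendsto_ereal)
      have "L \<le> ereal (\<Sum>T\<in>F. X T)"
      proof (rule LIMSEQ_le[OF L' S''])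
        show "\<exists>N. \<forall>n\<ge>N. ereal (c (r n)) * fst (seq (r n)) s \<le> ereal (\<Sum>T\<in>F. W (r n) T)"
          using srcb[OF s u] unfolding FF I_def by blast
      qed
      then have "ereal (lam s) \<le> ereal (\<Sum>T\<in>F. X T)" using Ll by (rule order_trans[rotated])
      then show ?thesis using eqX by simp
    qed
    then show "lam s \<le> (\<Sum>i\<in>{i. i < card RS \<and> in_node S E hed Orig u \<inter> f i \<noteq> {} \<and> nu (f i) = s}. Y (f i))"
      using eq unfolding I_def by simp
  qed
  show ?thesis unfolding zero_achievable_routing_def
    by (rule exI[of _ "card RS"], rule exI[of _ f], rule exI[of _ "\<lambda>i. Y (f i)"])
      (rule conjI[OF G1 conjI[OF G2 G3]])
qed

theorem theorem6:
  fixes V :: "'v set" and E :: "'e set" and tal :: "'e \<Rightarrow> 'v" and hed :: "'e \<Rightarrow> 'v set"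
    and S :: "'s set" and Orig :: "'s \<Rightarrow> 'v set" and D :: "'s \<Rightarrow> 'v set"
    and lam :: "'s \<Rightarrow> real" and om :: "'e \<Rightarrow> real"
  assumes "network_problem V E tal hed S Orig D"
    and "\<forall>s\<in>S. lam s \<ge> 0"
    and "\<forall>e\<in>E. om e \<ge> 0"
  shows "zero_achievable_routing E tal hed S Orig D lam om \<longleftrightarrow>
    (lam, om) \<in> CL S E (proj_star S E hed Orig D `
        {h. almost_atomic S E h \<and> C_T S E tal hed Orig h \<and> C_I S h})"
proof -
  have fS: "finite S" and fE: "finite E" using assms(1) unfolding network_problem_def by simp_all
  show ?thesis
  proof
    assume "zero_achievable_routing E tal hed S Orig D lam om"
    then show "(lam, om) \<in> CL S E (proj_star S E hed Orig D `
        {h. almost_atomic S E h \<and> C_T S E tal hed Orig h \<and> C_I S h})"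
      by (rule forward[OF fS])
  next
    assume "(lam, om) \<in> CL S E (proj_star S E hed Orig D `
        {h. almost_atomic S E h \<and> C_T S E tal hed Orig h \<and> C_I S h})"
    then show "zero_achievable_routing E tal hed S Orig D lam om"
      by (rule backward[OF fS fE assms(2)])
  qed
qed

end
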